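(* Let $(X,d)$ be a finite metric space whose distances are integers in $[0,\frac{16k}{\varepsilon}]$, for a positive integer $k$ and $\varepsilon>0$. For a nonempty $S\subseteq X$ and $t\in[k]$, let $(\mathcal{C}_1,\dots,\mathcal{C}_t)$ be the output of $\mathtt{detRecMSD}(S,t)$ and let $\operatorname{opt}_i(S)$ denote the cost of an optimal $i$-clustering of $S$. Then $\operatorname{cost}(\mathcal{C}_r)=\operatorname{opt}_r(S)$ for every $r\in\{1,\dots,t\}$.
   Context: An $i$-clustering of $S$ is a collection of at most $i$ subsets whose union is $S$; its cost is the sum of the diameters $\operatorname{diam}(C)=\max_{p,q\in C}d(p,q)$ of its sets. $\operatorname{Ball}(x,R)=\{z\in X:d(x,z)\le R\}$. The deterministic procedure $\mathtt{detRecMSD}(S,t)$ is: set $\mathcal{C}_i\gets\{S\}$ for all $i\in\{1,\dots,t\}$; if $t=1$ or $|S|=1$ return $(\mathcal{C}_1,\dots,\mathcal{C}_t)$. Otherwise let $x,y\in S$ with $d(x,y)=\operatorname{diam}(S)$; for each integer $R=0,1,\dots,\operatorname{diam}(S)-1$: let $S_1=S\cap\operatorname{Ball}(x,R)$, $S_2=S\setminus\operatorname{Ball}(x,R)$, compute $\mathcal{A}=\mathtt{detRecMSD}(S_1,t-1)$ and $\mathcal{B}=\mathtt{detRecMSD}(S_2,t-1)$, and for all $i,j\in\{1,\dots,t-1\}$ with $i+j\le t$, if $\operatorname{cost}(\mathcal{A}_i\cup\mathcal{B}_j)<\operatorname{cost}(\mathcal{C}_{i+j})$ set $\mathcal{C}_{i+j}\gets\mathcal{A}_i\cup\mathcal{B}_j$.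 Finally return $(\mathcal{C}_1,\dots,\mathcal{C}_t)$. *)

theory Defs
  imports Complex_Main
begin

definition diam :: "('a \<Rightarrow> 'a \<Rightarrow> int) \<Rightarrow> 'a set \<Rightarrow> int" where
  "diam d C = (if C = {} then 0 else Max {d p q | p q. p \<in> C \<and> q \<in> C})"

definition cost :: "('a \<Rightarrow> 'a \<Rightarrow> int) \<Rightarrow> 'a set set \<Rightarrow> int" where
  "cost d \<C> = (\<Sum>C\<in>\<C>. diam d C)"

definition is_clustering :: "nat \<Rightarrow> 'a set \<Rightarrow> 'a set set \<Rightarrow> bool" where
  "is_clustering i S \<C> \<longleftrightarrow> \<C> \<subseteq> Pow S \<and> finite \<C> \<and> card \<C> \<le> i \<and> \<Union>\<C> = S"

definition opt :: "('a \<Rightarrow> 'a \<Rightarrow> int) \<Rightarrow> nat \<Rightarrow> 'a set \<Rightarrow> int" where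
  "opt d i S = Min {cost d \<C> | \<C>. is_clustering i S \<C>}"

text \<open>The choice of the diametral point x is
  delegated to the parameter pick; the output is the map i \<mapsto> C_i
  (meaningful for i in {1..t}).  The loops over R and over the pairs (i,j)
  are executed in increasing order (i outer, j inner).\<close>
primrec detRecMSD ::
  "('a set \<Rightarrow> 'a) \<Rightarrow> ('a \<Rightarrow> 'a \<Rightarrow> int) \<Rightarrow> nat \<Rightarrow> 'a set \<Rightarrow> nat \<Rightarrow> 'a set set" where
  "detRecMSD pick d 0 S = (\<lambda>i. {S})"
| "detRecMSD pick d (Suc t') S =
     (if t' = 0 \<or> card S = 1 then (\<lambda>i. {S})
      else
        (let x = pick S;
             pairs = [(i, j). i \<leftarrow> [1..<Suc t'], j \<leftarrow> [1..<Suc t'], i + j \<le> Suc t'];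
             step = (\<lambda>R \<C>.
               (let S1 = {z \<in> S. d x z \<le> int R};
                    S2 = S - S1;
                    \<A> = detRecMSD pick d t' S1;
                    \<B> = detRecMSD pick d t' S2
                in fold (\<lambda>(i, j) \<C>.
                      if cost d (\<A> i \<union> \<B> j) < cost d (\<C> (i + j))
                      then \<C>(i + j := \<A> i \<union> \<B> j) else \<C>) pairs \<C>))
         in fold step [0..<nat (diam d S)] (\<lambda>i. {S})))"

end

theory Submission
  imports Defs
begin

lemma fold_inner:
  fixes cst :: "'c set \<Rightarrow> int"
  shows "C' = fold (\<lambda>(i, j) C. if cst (A i \<union> B j) < cst (C (i + j)) then C(i + j := A i \<union> B j) else C) ps C0 \<Longrightarrow>
    (\<forall>r. cst (C' r) \<le> cst (C0 r)) \<and> (\<forall>(i,j)\<in>set ps. cst (C' (i+j)) \<le> cst (A i \<union> B j)) \<and>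
    (\<forall>r. C' r = C0 r \<or> (\<exists>(i,j)\<in>set ps. i + j = r \<and> C' r = A i \<union> B j))"
proof (induction ps arbitrary: C0)
  case Nil
  then show ?case by simp
next
  case (Cons p ps)
  obtain i j where p: "p = (i, j)" by (cases p)
  define C1 where "C1 = (if cst (A i \<union> B j) < cst (C0 (i + j)) then C0(i + j := A i \<union> B j) else C0)"
  have C': "C' = fold (\<lambda>(i, j) C. if cst (A i \<union> B j) < cst (C (i + j)) then C(i + j := A i \<union> B j) else C) ps C1"
    using Cons.prems by (simp add: p C1_def)
  note IH = Cons.IH[OF C']
  have c1: "\<forall>r. cst (C1 r) \<le> cst (C0 r)" by (auto simp: C1_def)
  have c2: "cst (C1 (i+j)) \<le> cst (A i \<union> B j)" by (auto simp: C1_def)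
  have c3: "\<forall>r. C1 r = C0 r \<or> (i + j = r \<and> C1 r = A i \<union> B j)" by (auto simp: C1_def)
  show ?case
  proof (intro conjI)
    show "\<forall>r. cst (C' r) \<le> cst (C0 r)" using IH c1 by (meson order_trans)
    show "\<forall>(i',j')\<in>set (p # ps). cst (C' (i'+j')) \<le> cst (A i' \<union> B j')"
      using IH c2 p by (auto intro: order_trans)
    show "\<forall>r. C' r = C0 r \<or> (\<exists>(i',j')\<in>set (p # ps). i' + j' = r \<and> C' r = A i' \<union> B j')"
    proof
      fix r
      show "C' r = C0 r \<or> (\<exists>(i',j')\<in>set (p # ps). i' + j' = r \<and> C' r = A i' \<union> B j')"
      proof (cases "C' r = C1 r")
        case True
        then show ?thesis using c3[rule_format, of r] p by auto
      next
        case False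
        then have "\<exists>(i',j')\<in>set ps. i' + j' = r \<and> C' r = A i' \<union> B j'" using IH by blast
        then show ?thesis by auto
      qed
    qed
  qed
qed

lemma fold_outer:
  fixes cst :: "'c set \<Rightarrow> int"
  shows "C' = fold (\<lambda>R C. fold (\<lambda>(i, j) C. if cst (A R i \<union> B R j) < cst (C (i + j)) then C(i + j := A R i \<union> B R j) else C) ps C) Rs C0 \<Longrightarrow>
    (\<forall>r. cst (C' r) \<le> cst (C0 r)) \<and> (\<forall>R\<in>set Rs. \<forall>(i,j)\<in>set ps. cst (C' (i+j)) \<le> cst (A R i \<union> B R j)) \<and>
    (\<forall>r. C' r = C0 r \<or> (\<exists>R\<in>set Rs. \<exists>(i,j)\<in>set ps. i + j = r \<and> C' r = A R i \<union> B R j))"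
proof (induction Rs arbitrary: C0)
  case Nil
  then show ?case by simp
next
  case (Cons R Rs)
  define C1 where "C1 = fold (\<lambda>(i, j) C. if cst (A R i \<union> B R j) < cst (C (i + j)) then C(i + j := A R i \<union> B R j) else C) ps C0"
  have C': "C' = fold (\<lambda>R C. fold (\<lambda>(i, j) C. if cst (A R i \<union> B R j) < cst (C (i + j)) then C(i + j := A R i \<union> B R j) else C) ps C) Rs C1"
    using Cons.prems by (simp add: C1_def)
  note IH = Cons.IH[OF C']
  note I = fold_inner[OF C1_def]
  show ?case
  proof (intro conjI)
    show "\<forall>r. cst (C' r) \<le> cst (C0 r)" using IH I by (meson order_trans)
    show "\<forall>R'\<in>set (R # Rs). \<forall>(i,j)\<in>set ps. cst (C' (i+j)) \<le> cst (A R' i \<union> B R' j)"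
      using IH I by (auto intro: order_trans)
    show "\<forall>r. C' r = C0 r \<or> (\<exists>R'\<in>set (R # Rs). \<exists>(i,j)\<in>set ps. i + j = r \<and> C' r = A R' i \<union> B R' j)"
    proof
      fix r
      show "C' r = C0 r \<or> (\<exists>R'\<in>set (R # Rs). \<exists>(i,j)\<in>set ps. i + j = r \<and> C' r = A R' i \<union> B R' j)"
        using IH[THEN conjunct2, THEN conjunct2, rule_format, of r] I[THEN conjunct2, THEN conjunct2, rule_format, of r]
        by fastforce
    qed
  qed
qed


lemma diam_ge:
  assumes "finite C" "p \<in> C" "q \<in> C" shows "d p q \<le> diam d C"
proof -
  have e: "{d p q | p q. p \<in> C \<and> q \<in> C} = (\<lambda>(p,q). d p q) ` (C \<times> C)" by auto
  have f: "finite {d p q | p q. p \<in> C \<and> q \<in> C}"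
    unfolding e using assms(1) by simp
  show ?thesis using assms f unfolding diam_def by (auto intro!: Max_ge)
qed

lemma diam_attained:
  assumes "finite C" "C \<noteq> {}" shows "\<exists>p\<in>C. \<exists>q\<in>C. diam d C = d p q"
proof -
  have e: "{d p q | p q. p \<in> C \<and> q \<in> C} = (\<lambda>(p,q). d p q) ` (C \<times> C)" by auto
  have f: "finite {d p q | p q. p \<in> C \<and> q \<in> C}"
    unfolding e using assms(1) by simp
  have ne: "{d p q | p q. p \<in> C \<and> q \<in> C} \<noteq> {}" using assms(2) by blast
  have "Max {d p q | p q. p \<in> C \<and> q \<in> C} \<in> {d p q | p q. p \<in> C \<and> q \<in> C}"
    using Max_in[OF f ne] .
  then show ?thesis using assms(2) unfolding diam_def by auto
qed

lemma diam_nonneg: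
  assumes "finite C" "\<forall>p\<in>C. 0 \<le> d p p" shows "0 \<le> diam d C"
proof (cases "C = {}")
  case True then show ?thesis by (simp add: diam_def)
next
  case False
  then obtain p where "p \<in> C" by blast
  then show ?thesis using assms diam_ge[OF assms(1), of p p d] by force
qed

lemma diam_mono:
  assumes "finite B" "A \<subseteq> B" "A \<noteq> {}" shows "diam d A \<le> diam d B"
proof -
  obtain p q where "p \<in> A" "q \<in> A" "diam d A = d p q"
    using diam_attained[OF finite_subset[OF assms(2,1)] assms(3)] by blast
  then show ?thesis using diam_ge[OF assms(1), of p q d] assms(2) by auto
qed

lemma cost_Un_le:
  assumes "finite P" "finite Q" "\<forall>C\<in>P \<union> Q. 0 \<le> diam d C"
  shows "cost d (P \<union> Q) \<le> cost d P + cost d Q"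
proof -
  have "cost d (P \<union> Q) = cost d P + cost d Q - (\<Sum>C\<in>P \<inter> Q. diam d C)"
    unfolding cost_def using sum_Un[OF assms(1,2)] by simp
  moreover have "0 \<le> (\<Sum>C\<in>P \<inter> Q. diam d C)" using assms(3) by (intro sum_nonneg) auto
  ultimately show ?thesis by linarith
qed

lemma clustering_Un:
  assumes "is_clustering i S1 P" "is_clustering j S2 Q"
  shows "is_clustering (i + j) (S1 \<union> S2) (P \<union> Q)"
  using assms unfolding is_clustering_def
  by (auto intro: order_trans[OF card_Un_le])

lemma clustering_mono: "is_clustering i S P \<Longrightarrow> i \<le> j \<Longrightarrow> is_clustering j S P"
  unfolding is_clustering_def by auto

lemma clustering_single: "1 \<le> r \<Longrightarrow> is_clustering r S {S}"
  unfolding is_clustering_def by auto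

lemma clustering_one: "is_clustering 1 S P \<Longrightarrow> S \<noteq> {} \<Longrightarrow> P = {S}"
proof -
  assume a: "is_clustering 1 S P" "S \<noteq> {}"
  then have f: "finite P" "card P \<le> 1" "\<Union>P = S" unfolding is_clustering_def by auto
  then have "P \<noteq> {}" using a(2) by auto
  then have "card P = 1" using f by (simp add: card_gt_0_iff le_antisym Suc_le_eq)
  then obtain C where "P = {C}" using card_1_singletonE by blast
  then show "P = {S}" using f(3) by simp
qed

lemma main:
  assumes finX: "finite X"
    and d_zero: "\<forall>p\<in>X. \<forall>q\<in>X. d p q = 0 \<longleftrightarrow> p = q"
    and d_sym: "\<forall>p\<in>X. \<forall>q\<in>X. d p q = d q p"
    and d_tri: "\<forall>p\<in>X. \<forall>q\<in>X. \<forall>z\<in>X. d p z \<le> d p q + d q z"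
    and d_nonneg: "\<forall>p\<in>X. \<forall>q\<in>X. 0 \<le> d p q"
    and pick: "\<forall>T. T \<subseteq> X \<and> T \<noteq> {} \<longrightarrow>
                 pick T \<in> T \<and> (\<exists>y\<in>T. d (pick T) y = diam d T)"
  shows "S \<subseteq> X \<Longrightarrow> S \<noteq> {} \<Longrightarrow> 1 \<le> r \<Longrightarrow> r \<le> t \<Longrightarrow>
    is_clustering r S (detRecMSD pick d t S r) \<and>
    (\<forall>P. is_clustering r S P \<longrightarrow> cost d (detRecMSD pick d t S r) \<le> cost d P)"
proof (induction t arbitrary: S r)
  case 0
  then show ?case by simp
next
  case (Suc t')
  have finS: "finite S" using Suc.prems(1) finX finite_subset by blast
  have dnn: "\<forall>C. C \<subseteq> X \<longrightarrow> 0 \<le> diam d C"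
  proof (intro allI impI)
    fix C assume C: "C \<subseteq> X"
    then have "finite C" using finX finite_subset by blast
    moreover have "\<forall>p\<in>C. 0 \<le> d p p" using C d_nonneg by blast
    ultimately show "0 \<le> diam d C" by (rule diam_nonneg)
  qed
  have costnn: "0 \<le> cost d P" if "is_clustering r' T P" "T \<subseteq> X" for r' T P
  proof -
    have "\<forall>C\<in>P. C \<subseteq> X" using that unfolding is_clustering_def by blast
    then have "\<forall>C\<in>P. 0 \<le> diam d C" using dnn by blast
    then show ?thesis unfolding cost_def by (simp add: sum_nonneg)
  qed
  show ?case
  proof (cases "t' = 0 \<or> card S = 1")
    case True
    have out: "detRecMSD pick d (Suc t') S r = {S}" using True by simp
    have "cost d {S} \<le> cost d P" if P: "is_clustering r S P" for P
    proof (cases "t' = 0")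
      case True
      then have "r = 1" using Suc.prems by simp
      then have "P = {S}" using clustering_one P Suc.prems by blast
      then show ?thesis by simp
    next
      case False
      then have "card S = 1" using True by simp
      then obtain s where s: "S = {s}" using card_1_singletonE by blast
      have "d s s = 0" using d_zero Suc.prems(1) s by auto
      then have "diam d S = 0" unfolding s diam_def by simp
      then show ?thesis using costnn[OF P Suc.prems(1)] by (simp add: cost_def)
    qed
    then show ?thesis using out clustering_single Suc.prems by auto
  next
    case False
    then have t'1: "t' \<ge> 1" and cardS: "card S \<noteq> 1" by auto
    define x where "x = pick S"
    have xS: "x \<in> S" and "\<exists>y\<in>S. d x y = diam d S"
      using pick Suc.prems unfolding x_def by auto
    then obtain y where yS: "y \<in> S" and dxy: "d x y = diam d S" by blast
    define D where "D = diam d S"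
    obtain z where zS: "z \<in> S" and zx: "z \<noteq> x"
    proof -
      have "S \<noteq> {x}" using cardS by auto
      then have "\<not> S \<subseteq> {x}" using xS by blast
      then show ?thesis using that by blast
    qed
    have "0 < d x z" using d_zero d_nonneg xS zS zx Suc.prems(1)
      by (metis less_le subsetD)
    moreover have "d x z \<le> D" unfolding D_def using diam_ge[OF finS xS zS] .
    ultimately have Dpos: "0 < D" by simp
    define S1 where "S1 = (\<lambda>R::nat. {z \<in> S. d x z \<le> int R})"
    define S2 where "S2 = (\<lambda>R::nat. S - S1 R)"
    define A where "A = (\<lambda>R. detRecMSD pick d t' (S1 R))"
    define B where "B = (\<lambda>R. detRecMSD pick d t' (S2 R))"
    define ps where "ps = [(i, j). i \<leftarrow> [1..<Suc t'], j \<leftarrow> [1..<Suc t'], i + j \<le> Suc t']"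
    have ps_iff: "(i, j) \<in> set ps \<longleftrightarrow> 1 \<le> i \<and> 1 \<le> j \<and> i + j \<le> Suc t'" for i j
      unfolding ps_def by auto
    define out where "out = detRecMSD pick d (Suc t') S"
    have out_eq: "out = fold (\<lambda>R C. fold (\<lambda>(i, j) C. if cost d (A R i \<union> B R j) < cost d (C (i + j)) then C(i + j := A R i \<union> B R j) else C) ps C) [0..<nat D] (\<lambda>i. {S})"
    proof -
      have nf: "(t' = 0 \<or> card S = 1) = False" using False by simp
      show ?thesis unfolding out_def A_def B_def S1_def S2_def ps_def D_def x_def detRecMSD.simps(2) Let_def
        by (simp only: nf if_False)
    qed
    note F = fold_outer[OF out_eq]
    have dxx: "d x x = 0" using xS d_zero Suc.prems(1) by blast
    have S1x: "x \<in> S1 R" for R using xS dxx S1_def by auto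
    have S2y: "y \<in> S2 R" if "R < nat D" for R using yS dxy that unfolding S1_def S2_def D_def by auto
    have S1X: "S1 R \<subseteq> X" "S2 R \<subseteq> X" for R using Suc.prems(1) unfolding S1_def S2_def by auto
    have IHA: "is_clustering i (S1 R) (A R i) \<and> (\<forall>P. is_clustering i (S1 R) P \<longrightarrow> cost d (A R i) \<le> cost d P)"
      if "1 \<le> i" "i \<le> t'" for R i
      unfolding A_def using Suc.IH[OF S1X(1) _ that] S1x by blast
    have IHB: "is_clustering j (S2 R) (B R j) \<and> (\<forall>P. is_clustering j (S2 R) P \<longrightarrow> cost d (B R j) \<le> cost d P)"
      if "1 \<le> j" "j \<le> t'" "R < nat D" for R j
      unfolding B_def using Suc.IH[OF S1X(2) _ that(1,2)] S2y[OF that(3)] by blast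
    have S12: "S1 R \<union> S2 R = S" for R unfolding S1_def S2_def by auto
    have isc: "is_clustering r S (out r)"
    proof -
      have "out r = {S} \<or> (\<exists>R\<in>set [0..<nat D]. \<exists>(i,j)\<in>set ps. i + j = r \<and> out r = A R i \<union> B R j)"
        using F by blast
      then show ?thesis
      proof
        assume "out r = {S}" then show ?thesis using clustering_single Suc.prems by simp
      next
        assume "\<exists>R\<in>set [0..<nat D]. \<exists>(i,j)\<in>set ps. i + j = r \<and> out r = A R i \<union> B R j"
        then obtain R i j where R: "R < nat D" and ij: "(i,j) \<in> set ps" "i + j = r" and o: "out r = A R i \<union> B R j"
          by auto
        have "is_clustering (i + j) (S1 R \<union> S2 R) (A R i \<union> B R j)"
        proof -
          have b: "1 \<le> i" "1 \<le> j" "i + j \<le> Suc t'" using ij(1) ps_iff by auto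
          then have b2: "i \<le> t'" "j \<le> t'" by auto
          show ?thesis using clustering_Un[OF IHA[OF b(1) b2(1), THEN conjunct1] IHB[OF b(2) b2(2) R, THEN conjunct1]] .
        qed
        then show ?thesis using o ij S12 by simp
      qed
    qed
    have cUn: "cost d (A R i \<union> B R j) \<le> cost d (A R i) + cost d (B R j)"
      if "1 \<le> i" "i \<le> t'" "1 \<le> j" "j \<le> t'" "R < nat D" for R i j
    proof -
      have a: "is_clustering i (S1 R) (A R i)" using IHA[OF that(1,2)] by blast
      have b: "is_clustering j (S2 R) (B R j)" using IHB[OF that(3,4,5)] by blast
      have fa: "finite (A R i)" using a unfolding is_clustering_def by blast
      have fb: "finite (B R j)" using b unfolding is_clustering_def by blast
      have sa: "\<forall>C\<in>A R i. C \<subseteq> X" using a S1X(1)[of R] unfolding is_clustering_def by blast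
      have sb: "\<forall>C\<in>B R j. C \<subseteq> X" using b S1X(2)[of R] unfolding is_clustering_def by blast
      have "\<forall>C\<in>A R i \<union> B R j. 0 \<le> diam d C"
      proof
        fix C assume "C \<in> A R i \<union> B R j"
        then have "C \<subseteq> X" using sa sb by auto
        then show "0 \<le> diam d C" using dnn by simp
      qed
      then show ?thesis using cost_Un_le[OF fa fb] by blast
    qed
    have best: "cost d (out r) \<le> cost d P" if P: "is_clustering r S P" for P
    proof (cases "r = 1")
      case True
      then have "P = {S}" using clustering_one P Suc.prems by blast
      moreover have "cost d (out r) \<le> cost d {S}" using F by simp
      ultimately show ?thesis by simp
    next
      case False
      then have r2: "2 \<le> r" using Suc.prems by simp
      have finP: "finite P" and PS: "\<Union>P = S" and PPow: "P \<subseteq> Pow S" and cardP: "card P \<le> r"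
        using P unfolding is_clustering_def by auto
      show ?thesis
      proof (cases "\<exists>R < nat D. \<forall>C\<in>P. C \<subseteq> S1 R \<or> C \<subseteq> S2 R")
        case True
        then obtain R where R: "R < nat D" and sep: "\<forall>C\<in>P. C \<subseteq> S1 R \<or> C \<subseteq> S2 R" by blast
        define PA where "PA = {C\<in>P. C \<subseteq> S1 R}"
        define PB where "PB = P - PA"
        have disj: "S1 R \<inter> S2 R = {}" unfolding S2_def by auto
        have UA: "\<Union>PA = S1 R"
        proof
          show "\<Union>PA \<subseteq> S1 R" unfolding PA_def by auto
          show "S1 R \<subseteq> \<Union>PA"
          proof
            fix z assume z: "z \<in> S1 R"
            then have "z \<in> S" unfolding S1_def by auto
            then obtain C where C: "C \<in> P" "z \<in> C" using PS by auto
            then have "C \<subseteq> S1 R" using sep z disj by blast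
            then show "z \<in> \<Union>PA" using C unfolding PA_def by auto
          qed
        qed
        have UB: "\<Union>PB = S2 R"
        proof
          show "\<Union>PB \<subseteq> S2 R" unfolding PB_def PA_def using sep by auto
          show "S2 R \<subseteq> \<Union>PB"
          proof
            fix z assume z: "z \<in> S2 R"
            then have "z \<in> S" unfolding S2_def by auto
            then obtain C where C: "C \<in> P" "z \<in> C" using PS by auto
            then have "\<not> C \<subseteq> S1 R" using z disj by blast
            then show "z \<in> \<Union>PB" using C unfolding PB_def PA_def by auto
          qed
        qed
        have finA: "finite PA" and finB: "finite PB" using finP unfolding PA_def PB_def by auto
        have cA: "card PA \<ge> 1"
        proof -
          have "PA \<noteq> {}" using UA S1x[of R] by auto
          then show ?thesis using finA by (simp add: Suc_le_eq card_gt_0_iff)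
        qed
        have cB: "card PB \<ge> 1"
        proof -
          have "PB \<noteq> {}" using UB S2y[OF R] by auto
          then show ?thesis using finB by (simp add: Suc_le_eq card_gt_0_iff)
        qed
        have PAB: "P = PA \<union> PB" "PA \<inter> PB = {}" unfolding PB_def PA_def by auto
        have cAB: "card PA + card PB = card P"
          using card_Un_disjoint[OF finA finB PAB(2)] PAB(1) by simp
        define j where "j = card PB"
        define i where "i = r - j"
        have i1: "1 \<le> i" "i \<le> t'" "card PA \<le> i" using cA cB cAB cardP Suc.prems unfolding i_def j_def by auto
        have j1: "1 \<le> j" "j \<le> t'" using cA cB cAB cardP Suc.prems unfolding j_def by auto
        have ijr: "i + j = r" using cA cB cAB cardP unfolding i_def j_def by auto
        have clA: "is_clustering i (S1 R) PA"
          using UA finA i1 PPow unfolding is_clustering_def PA_def by auto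
        have clB: "is_clustering j (S2 R) PB"
          using UB finB PPow unfolding is_clustering_def j_def by auto
        have "(i, j) \<in> set ps" using ps_iff i1 j1 ijr Suc.prems by auto
        then have "cost d (out (i + j)) \<le> cost d (A R i \<union> B R j)"
          using F R by fastforce
        also have "\<dots> \<le> cost d (A R i) + cost d (B R j)" using cUn i1 j1 R by blast
        also have "\<dots> \<le> cost d PA + cost d PB"
          using IHA[OF i1(1,2)] IHB[OF j1 R] clA clB by (meson add_mono)
        also have "\<dots> = cost d P"
          unfolding cost_def by (subst PAB(1), rule sum.union_disjoint[OF finA finB PAB(2), symmetric])
        finally show ?thesis using ijr by simp
      next
        case False
        then have cross: "\<forall>R < nat D. \<exists>C\<in>P. \<not> C \<subseteq> S1 R \<and> \<not> C \<subseteq> S2 R" by blast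
        define J where "J = (\<lambda>C. {R::int. \<exists>q\<in>C. \<exists>p\<in>C. d x q \<le> R \<and> R < d x p})"
        have Jb: "finite (J C) \<and> int (card (J C)) \<le> diam d C" if C: "C \<in> P" for C
        proof (cases "C = {}")
          case True
          then show ?thesis unfolding J_def using dnn by (simp add: diam_def)
        next
          case False
          have CS: "C \<subseteq> S" using C PPow by auto
          have finC: "finite C" using CS finS finite_subset by blast
          define m where "m = Min (d x ` C)"
          have "m \<in> d x ` C" unfolding m_def using finC False by (intro Min_in) auto
          then obtain q0 where q0: "q0 \<in> C" "d x q0 = m" by auto
          have JI: "J C \<subseteq> {m..<m + diam d C}"
          proof
            fix R assume "R \<in> J C"
            then obtain q p where qp: "q \<in> C" "p \<in> C" "d x q \<le> R" "R < d x p" unfolding J_def by auto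
            have "m \<le> d x q" unfolding m_def using finC qp by auto
            moreover have "d x p \<le> d x q0 + d q0 p"
              using d_tri xS CS qp q0 Suc.prems(1) by blast
            moreover have "d q0 p \<le> diam d C" using diam_ge[OF finC q0(1) qp(2)] .
            ultimately show "R \<in> {m..<m + diam d C}" using qp q0 by auto
          qed
          have finJ: "finite (J C)" by (rule finite_subset[OF JI]) simp
          have "card (J C) \<le> card {m..<m + diam d C}" by (rule card_mono[OF _ JI]) simp
          also have "\<dots> = nat (diam d C)" by simp
          finally have cj: "card (J C) \<le> nat (diam d C)" .
          have "C \<subseteq> X" using CS Suc.prems(1) by blast
          then have "0 \<le> diam d C" using dnn by blast
          then show ?thesis using finJ cj by linarith
        qed
        have sub: "{0..<D} \<subseteq> (\<Union>C\<in>P. J C)"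
        proof
          fix R :: int assume R: "R \<in> {0..<D}"
          then have "nat R < nat D" by auto
          then obtain C where C: "C \<in> P" "\<not> C \<subseteq> S1 (nat R)" "\<not> C \<subseteq> S2 (nat R)" using cross by blast
          have CS: "C \<subseteq> S" using C PPow by auto
          obtain p where p: "p \<in> C" "p \<notin> S1 (nat R)" using C by auto
          obtain q where q: "q \<in> C" "q \<notin> S2 (nat R)" using C by auto
          have "R < d x p" using p CS R unfolding S1_def by auto
          moreover have "d x q \<le> R" using q CS R unfolding S1_def S2_def by auto
          ultimately show "R \<in> (\<Union>C\<in>P. J C)" using C p q unfolding J_def by blast
        qed
        have finU: "finite (\<Union>C\<in>P. J C)" using finP Jb by blast
        have "D = int (card {0..<D})" using Dpos by simp
        also have "\<dots> \<le> int (card (\<Union>C\<in>P. J C))" using card_mono[OF finU sub] by linarith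
        also have "\<dots> \<le> int (\<Sum>C\<in>P. card (J C))" by (subst of_nat_le_iff) (rule card_UN_le[OF finP])
        also have "\<dots> = (\<Sum>C\<in>P. int (card (J C)))" by simp
        also have "\<dots> \<le> (\<Sum>C\<in>P. diam d C)" using Jb by (intro sum_mono) blast
        finally have DP: "D \<le> cost d P" unfolding cost_def .
        have R0: "0 < nat D" using Dpos by simp
        have S10: "S1 0 = {x}" using S1x[of 0] d_zero d_nonneg Suc.prems(1) xS unfolding S1_def
          by (auto simp: order_antisym_conv subset_iff)
        have r1: "1 \<le> r - 1" "r - 1 \<le> t'" using r2 Suc.prems by auto
        have "(1, r - 1) \<in> set ps" using ps_iff r2 Suc.prems by auto
        then have "cost d (out (1 + (r - 1))) \<le> cost d (A 0 1 \<union> B 0 (r - 1))"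
          using F R0 by fastforce
        also have "\<dots> \<le> cost d (A 0 1) + cost d (B 0 (r - 1))" using cUn r1 R0 t'1 by blast
        also have "\<dots> \<le> cost d {S1 0} + cost d {S2 0}"
          using IHA[OF order_refl t'1, of 0] IHB[OF r1 R0] clustering_single
          by (meson add_mono order_refl r1(1))
        also have "\<dots> \<le> D"
        proof -
          have "diam d (S1 0) = 0" unfolding S10 diam_def using dxx by simp
          moreover have "diam d (S2 0) \<le> D" unfolding D_def
            using diam_mono[OF finS] S2y[OF R0] unfolding S2_def by blast
          ultimately show ?thesis by (simp add: cost_def)
        qed
        finally show ?thesis using DP r2 by simp
      qed
    qed
    show ?thesis using isc best unfolding out_def by blast
  qed
qed

theorem lemma5:
  fixes X :: "'a set" and d :: "'a \<Rightarrow> 'a \<Rightarrow> int" and k :: nat and \<epsilon> :: real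
    and pick :: "'a set \<Rightarrow> 'a" and S :: "'a set" and t :: nat and r :: nat
  assumes finX: "finite X"
    and d_zero: "\<forall>p\<in>X. \<forall>q\<in>X. d p q = 0 \<longleftrightarrow> p = q"
    and d_sym: "\<forall>p\<in>X. \<forall>q\<in>X. d p q = d q p"
    and d_tri: "\<forall>p\<in>X. \<forall>q\<in>X. \<forall>z\<in>X. d p z \<le> d p q + d q z"
    and d_nonneg: "\<forall>p\<in>X. \<forall>q\<in>X. 0 \<le> d p q"
    and d_bound: "\<forall>p\<in>X. \<forall>q\<in>X. real_of_int (d p q) \<le> 16 * real k / \<epsilon>"
    and k_pos: "k \<ge> 1" and eps_pos: "\<epsilon> > 0"
    and pick: "\<forall>T. T \<subseteq> X \<and> T \<noteq> {} \<longrightarrow>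
                 pick T \<in> T \<and> (\<exists>y\<in>T. d (pick T) y = diam d T)"
    and S: "S \<subseteq> X" "S \<noteq> {}"
    and t: "1 \<le> t" "t \<le> k"
    and r: "1 \<le> r" "r \<le> t"
  shows "cost d (detRecMSD pick d t S r) = opt d r S"
proof -
  have finS: "finite S" using S(1) finX finite_subset by blast
  note M = main[OF finX d_zero d_sym d_tri d_nonneg pick S r(1) r(2)]
  let ?M = "{cost d \<C> | \<C>. is_clustering r S \<C>}"
  have "?M \<subseteq> cost d ` Pow (Pow S)" unfolding is_clustering_def by auto
  then have finM: "finite ?M" using finS by (meson finite_Pow_iff finite_imageI finite_subset)
  have "Min ?M = cost d (detRecMSD pick d t S r)"
  proof (rule Min_eqI[OF finM])
    show "cost d (detRecMSD pick d t S r) \<in> ?M" using M by blast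
    fix y assume "y \<in> ?M"
    then show "cost d (detRecMSD pick d t S r) \<le> y" using M by blast
  qed
  then show ?thesis unfolding opt_def by simp
qed

end
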